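(* $\mathrm{GL}_3(\mathbb{F}_5)$ contains exactly one conjugacy class of subgroups isomorphic to $A_5\times C_2$. *)

theory Defs
  imports "HOL-Analysis.Analysis" "HOL-Library.Numeral_Type" "HOL-Algebra.Algebra"
begin

text \<open>The finite field F_5 is the numeral type 5 (integers mod 5).
  GL_3(F_5): invertible 3x3 matrices over F_5 under matrix multiplication.\<close>

definition GL3F5 :: "(5^3^3) monoid" where
  "GL3F5 = \<lparr>carrier = {A. invertible A}, mult = (**), one = mat 1\<rparr>"

definition A5xC2 :: "((nat \<Rightarrow> nat) \<times> int) monoid" where
  "A5xC2 = DirProd (alt_group 5) (integer_mod_group 2)"

definition conj_subset :: "('a, 'b) monoid_scheme \<Rightarrow> 'a \<Rightarrow> 'a set \<Rightarrow> 'a set" where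
  "conj_subset G g H = (\<lambda>h. g \<otimes>\<^bsub>G\<^esub> h \<otimes>\<^bsub>G\<^esub> inv\<^bsub>G\<^esub> g) ` H"

end

theory Submission
  imports Defs
begin
lemma mm_add_r: "((A::'a::semiring_1^'n^'m) + B) ** C = A ** C + B ** C"
  by (simp add: matrix_matrix_mult_def vec_eq_iff sum.distrib distrib_right)
lemma mm_add_l: "(A::'a::semiring_1^'n^'m) ** (B + C) = A ** B + A ** C"
  by (simp add: matrix_add_ldistrib)
lemma mm_diff_l: "(A::'a::ring_1^'n^'m) ** (B - C) = A ** B - A ** C"
  by (simp add: matrix_matrix_mult_def vec_eq_iff sum_subtractf right_diff_distrib)
lemma mm_diff_r: "((A::'a::ring_1^'n^'m) - B) ** C = A ** C - B ** C"
  by (simp add: matrix_matrix_mult_def vec_eq_iff sum_subtractf left_diff_distrib)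
lemma mm_neg_l: "(- (A::'a::ring_1^'n^'m)) ** B = - (A ** B)"
  by (simp add: matrix_matrix_mult_def vec_eq_iff sum_negf)
lemma mm_neg_r: "(A::'a::ring_1^'n^'m) ** (- B) = - (A ** B)"
  by (simp add: matrix_matrix_mult_def vec_eq_iff sum_negf)
lemma mm_zero_l: "(0::'a::semiring_1^'n^'m) ** B = 0"
  by (simp add: matrix_matrix_mult_def vec_eq_iff)
lemma mm_zero_r: "(A::'a::semiring_1^'n^'m) ** 0 = 0"
  by (simp add: matrix_matrix_mult_def vec_eq_iff)

lemmas mmd = mm_add_r mm_add_l mm_diff_l mm_diff_r mm_neg_l mm_neg_r mm_zero_l mm_zero_r

lemma five_cases: "(x::5) = 0 \<or> x = 1 \<or> x = 2 \<or> x = 3 \<or> x = 4"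
proof (induct x)
  case (of_int z)
  then have "z = 0 \<or> z = 1 \<or> z = 2 \<or> z = 3 \<or> z = 4" by auto
  then show ?case by auto
qed

lemma five_eq0 [simp]: "(5::5) = 0" by simp

lemma five_double: "(x::5) + x = 0 \<Longrightarrow> x = 0"
  using five_cases[of x] by auto

lemma five_four: "(x::5) \<noteq> 0 \<Longrightarrow> x + x + x + x \<noteq> 0"
  using five_cases[of x] by auto

lemma five_unit: "(x::5) \<noteq> 0 \<Longrightarrow> \<exists>y. y * x = 1"
  using five_cases[of x] by (auto intro: exI[of _ 1] exI[of _ 2] exI[of _ 3] exI[of _ 4])

lemma five_cube: "(x::5) \<noteq> 0 \<Longrightarrow> x * x * x \<noteq> 0"
  using five_cases[of x] by auto

lemma mat_double: "(M::5^3^3) + M = 0 \<Longrightarrow> M = 0"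
  by (simp add: vec_eq_iff five_double)

definition adj3 :: "'a::comm_ring_1^3^3 \<Rightarrow> 'a^3^3" where
  "adj3 A = vector [vector [A$2$2*A$3$3 - A$2$3*A$3$2, A$1$3*A$3$2 - A$1$2*A$3$3, A$1$2*A$2$3 - A$1$3*A$2$2],
                    vector [A$2$3*A$3$1 - A$2$1*A$3$3, A$1$1*A$3$3 - A$1$3*A$3$1, A$1$3*A$2$1 - A$1$1*A$2$3],
                    vector [A$2$1*A$3$2 - A$2$2*A$3$1, A$1$2*A$3$1 - A$1$1*A$3$2, A$1$1*A$2$2 - A$1$2*A$2$1]]"

lemma adj3_r: "A ** adj3 A = mat (det A)"
  unfolding vec_eq_iff forall_3 adj3_def matrix_matrix_mult_def
  by (simp add: sum_3 det_3 mat_def vector_3 algebra_simps)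

lemma adj3_l: "adj3 A ** A = mat (det A)"
  unfolding vec_eq_iff forall_3 adj3_def matrix_matrix_mult_def
  by (simp add: sum_3 det_3 mat_def vector_3 algebra_simps)

lemma mat_mult_scal: "(mat u :: 'a::comm_ring_1^3^3) ** (mat v) = mat (u * v)"
  unfolding vec_eq_iff matrix_matrix_mult_def mat_def by (simp add: sum_3 forall_3)

lemma scal_comm: "(M::'a::comm_ring_1^3^3) ** (mat u ** N) = mat u ** (M ** N)"
  unfolding vec_eq_iff matrix_matrix_mult_def mat_def by (simp add: sum_3 forall_3 algebra_simps)

lemma det_nz_invertible:
  fixes A :: "5^3^3"
  assumes "det A \<noteq> 0"
  shows "invertible A"
proof -
  obtain u where u: "u * det A = 1" using five_unit assms by blast
  have "A ** (mat u ** adj3 A) = mat u ** (A ** adj3 A)" by (rule scal_comm)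
  also have "\<dots> = mat 1" by (simp add: adj3_r mat_mult_scal u)
  finally have 1: "A ** (mat u ** adj3 A) = mat 1" .
  have "(mat u ** adj3 A) ** A = mat u ** (adj3 A ** A)" by (simp add: matrix_mul_assoc)
  also have "\<dots> = mat 1" by (simp add: adj3_l mat_mult_scal u)
  finally have 2: "(mat u ** adj3 A) ** A = mat 1" .
  show ?thesis unfolding invertible_def using 1 2 by blast
qed

definition M3 :: "'a::zero \<Rightarrow> 'a \<Rightarrow> 'a \<Rightarrow> 'a \<Rightarrow> 'a \<Rightarrow> 'a \<Rightarrow> 'a \<Rightarrow> 'a \<Rightarrow> 'a \<Rightarrow> 'a^3^3" where
  "M3 a b c d e f g h i = vector [vector [a,b,c], vector [d,e,f], vector [g,h,i]]"

lemma M3_nth [simp]: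
  "M3 a b c d e f g h i $ 1 $ 1 = a" "M3 a b c d e f g h i $ 1 $ 2 = b" "M3 a b c d e f g h i $ 1 $ 3 = c"
  "M3 a b c d e f g h i $ 2 $ 1 = d" "M3 a b c d e f g h i $ 2 $ 2 = e" "M3 a b c d e f g h i $ 2 $ 3 = f"
  "M3 a b c d e f g h i $ 3 $ 1 = g" "M3 a b c d e f g h i $ 3 $ 2 = h" "M3 a b c d e f g h i $ 3 $ 3 = i"
  by (simp_all add: M3_def)

definition D1 :: "5^3^3" where "D1 = M3 1 0 0 0 4 0 0 0 4"
definition D2 :: "5^3^3" where "D2 = M3 4 0 0 0 4 0 0 0 1"
definition P3 :: "5^3^3" where "P3 = M3 0 0 1 1 0 0 0 1 0"

lemma mm_cols: "(A::'a::semiring_1^3^3) ** (\<chi> r k. V k $ r $ j) = (\<chi> r k. (A ** V k) $ r $ j)"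
  by (simp add: matrix_matrix_mult_def vec_eq_iff)

lemma mm_rowcol: "((\<chi> k r. W k $ i $ r) :: 'a::semiring_1^3^3) ** (\<chi> r k. V k $ r $ j) = (\<chi> k l. (W k ** V l) $ i $ j)"
  by (simp add: matrix_matrix_mult_def vec_eq_iff)

lemma det_mat3: "det (mat d :: 'a::comm_ring_1^3^3) = d * d * d"
  by (simp add: det_3 mat_def)

lemma normalize:
  fixes A1 A2 C :: "5^3^3"
  assumes h1: "A1 ** A1 = mat 1" and h2: "A2 ** A2 = mat 1" and h3: "A1 ** A2 = A2 ** A1"
    and h4: "C ** A1 = A1 ** A2 ** C" and h5: "C ** A2 = A1 ** C" and h6: "C ** C ** C = mat 1"
    and h7: "A1 \<noteq> mat 1"
  shows "\<exists>g g'. g ** g' = mat 1 \<and> g' ** g = mat 1 \<and> A1 ** g = g ** D1 \<and> A2 ** g = g ** D2 \<and> C ** g = g ** P3"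
proof -
  have r1: "A1 ** (A1 ** M) = M" for M by (metis h1 matrix_mul_assoc matrix_mul_lid)
  have r2: "A2 ** (A2 ** M) = M" for M by (metis h2 matrix_mul_assoc matrix_mul_lid)
  have r3: "A2 ** (A1 ** M) = A1 ** (A2 ** M)" for M by (metis h3 matrix_mul_assoc)
  have r3': "A2 ** A1 = A1 ** A2" using h3 by simp
  have r4: "C ** (A1 ** M) = A1 ** (A2 ** (C ** M))" for M by (metis h4 matrix_mul_assoc)
  have r5: "C ** (A2 ** M) = A1 ** (C ** M)" for M by (metis h5 matrix_mul_assoc)
  have r6: "C ** (C ** (C ** M)) = M" for M by (metis h6 matrix_mul_assoc matrix_mul_lid)
  have r6': "C ** (C ** C) = mat 1" by (metis h6 matrix_mul_assoc)
  have r12: "A1 ** (A1 ** A2) = A2" by (simp add: r1)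
  have l4: "A1 ** (C ** M) = C ** (A2 ** M)" for M by (metis h5 matrix_mul_assoc)
  have l5: "A2 ** (C ** M) = C ** (A1 ** (A2 ** M))" for M by (metis r1 r3 r4 r5)
  define E where "E = mat 1 + A1 - A2 - A1 ** A2"
  define E3 where "E3 = mat 1 - A1 - A2 + A1 ** A2"
  define E2 where "E2 = mat 1 - A1 + A2 - A1 ** A2"
  have A1E: "A1 ** E = E" unfolding E_def by (simp add: mmd h1 r12 algebra_simps)
  have A2E: "A2 ** E = - E" unfolding E_def by (simp add: mmd h2 r3 r2 r3' algebra_simps)
  have EA1: "E ** A1 = E" unfolding E_def
    by (simp add: mmd h1 matrix_mul_assoc[symmetric] r3' r12 algebra_simps)
  have EA2: "E ** A2 = - E" unfolding E_def
    by (simp add: mmd h2 matrix_mul_assoc[symmetric] r2 algebra_simps)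
  have EE: "E ** E = E + E + E + E"
  proof -
    have "E ** E = E ** mat 1 + E ** A1 - E ** A2 - (E ** A1) ** A2"
      unfolding E_def by (simp add: mmd matrix_mul_assoc)
    also have "\<dots> = E + E + E + E" by (simp add: EA1 EA2)
    finally show ?thesis .
  qed
  have CE: "C ** E = E3 ** C" unfolding E_def E3_def
    by (simp add: mmd matrix_mul_assoc[symmetric] r4 r5 h4 h5 r3 r1 algebra_simps)
  have CE3: "C ** E3 = E2 ** C" unfolding E2_def E3_def
    by (simp add: mmd matrix_mul_assoc[symmetric] r4 r5 h4 h5 r3 r1 algebra_simps)
  have Enz: "E \<noteq> 0"
  proof
    assume E0: "E = 0"
    have "E3 ** C = 0" using CE E0 by (simp add: mmd)
    then have E30: "E3 = 0" by (metis r6' matrix_mul_assoc matrix_mul_rid mmd(7))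
    have "E2 ** C = 0" using CE3 E30 by (simp add: mmd)
    then have E20: "E2 = 0" by (metis r6' matrix_mul_assoc matrix_mul_rid mmd(7))
    have h: "(mat 1 - A2) + (mat 1 - A2) = E + E3" unfolding E_def E3_def by (simp add: algebra_simps)
    have "(mat 1 - A2) + (mat 1 - A2) = 0" unfolding h E0 E30 by simp
    then have "mat 1 - A2 = 0" by (rule mat_double)
    then have A2I: "A2 = mat 1" by simp
    have h': "(mat 1 - A1 ** A2) + (mat 1 - A1 ** A2) = E + E2" unfolding E_def E2_def by (simp add: algebra_simps)
    have "(mat 1 - A1 ** A2) + (mat 1 - A1 ** A2) = 0" unfolding h' E0 E20 by simp
    then have "mat 1 - A1 ** A2 = 0" by (rule mat_double)
    then have "A1 ** A2 = mat 1" by simp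
    then show False using h7 A2I by simp
  qed
  then obtain i j where ij: "E $ i $ j \<noteq> 0" by (metis vec_eq_iff zero_index)
  define V :: "3 \<Rightarrow> 5^3^3" where "V k = (if k = 1 then E else if k = 2 then C ** E else C ** (C ** E))" for k
  define W :: "3 \<Rightarrow> 5^3^3" where "W k = (if k = 1 then E else if k = 2 then E ** (C ** C) else E ** C)" for k
  define g :: "5^3^3" where "g = (\<chi> r k. V k $ r $ j)"
  define gl :: "5^3^3" where "gl = (\<chi> k r. W k $ i $ r)"
  have ECE: "E ** (C ** E) = 0"
  proof -
    have "E ** (C ** E) = E ** (A1 ** (C ** E))" by (metis EA1 matrix_mul_assoc)
    also have "\<dots> = - (E ** (C ** E))" by (simp add: l4 A2E mmd)
    finally show ?thesis using mat_double by (metis add.right_inverse add_uminus_conv_diff diff_minus_eq_add)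
  qed
  have ECCE: "E ** (C ** (C ** E)) = 0"
  proof -
    have "E ** (C ** (C ** E)) = E ** (A1 ** (C ** (C ** E)))" by (metis EA1 matrix_mul_assoc)
    also have "\<dots> = - (E ** (C ** (C ** E)))" by (simp add: l4 l5 A1E A2E mmd)
    finally show ?thesis using mat_double by (metis add.right_inverse add_uminus_conv_diff diff_minus_eq_add)
  qed
  define d where "d = (E ** E) $ i $ j"
  have dnz: "d \<noteq> 0" unfolding d_def EE using ij five_four by simp
  have glg: "gl ** g = mat d"
    unfolding gl_def g_def mm_rowcol
    by (simp add: vec_eq_iff forall_3 mat_def V_def W_def d_def matrix_mul_assoc[symmetric] ECE ECCE r6 r6')
  have "det gl * det g = d * d * d" by (metis glg det_mul det_mat3)
  then have "det g \<noteq> 0" using five_cube[OF dnz] by auto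
  then obtain g' where g': "g ** g' = mat 1" "g' ** g = mat 1"
    using det_nz_invertible invertible_def by blast
  have A1V: "A1 ** V k = (if k = 1 then V k else - V k)" for k
    using exhaust_3[of k] by (auto simp: V_def A1E A2E l4 l5 mmd)
  have A2V: "A2 ** V k = (if k = 3 then V k else - V k)" for k
    using exhaust_3[of k] by (auto simp: V_def A1E A2E l4 l5 r3 r2 mmd)
  have CV: "C ** V k = V (if k = 1 then 2 else if k = 2 then 3 else 1)" for k
    using exhaust_3[of k] by (auto simp: V_def r6)
  have "A1 ** g = g ** D1"
    unfolding g_def mm_cols A1V D1_def
    by (simp add: vec_eq_iff forall_3 matrix_matrix_mult_def sum_3 algebra_simps)
  moreover have "A2 ** g = g ** D2"
    unfolding g_def mm_cols A2V D2_def
    by (simp add: vec_eq_iff forall_3 matrix_matrix_mult_def sum_3 algebra_simps)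
  moreover have "C ** g = g ** P3"
    unfolding g_def mm_cols CV P3_def
    by (simp add: vec_eq_iff forall_3 matrix_matrix_mult_def sum_3 algebra_simps)
  ultimately show ?thesis using g' by blast
qed

lemma M3_eta: "(A::'a::zero^3^3) = M3 (A$1$1) (A$1$2) (A$1$3) (A$2$1) (A$2$2) (A$2$3) (A$3$1) (A$3$2) (A$3$3)"
  unfolding vec_eq_iff forall_3 by simp

lemma M3_mult: "M3 a b c d e f g h i ** M3 a1 b1 c1 d1 e1 f1 g1 h1 i1 =
  M3 (a * a1 + b * d1 + c * g1) (a * b1 + b * e1 + c * h1) (a * c1 + b * f1 + c * i1)
     (d * a1 + e * d1 + f * g1) (d * b1 + e * e1 + f * h1) (d * c1 + e * f1 + f * i1)
     (g * a1 + h * d1 + i * g1) (g * b1 + h * e1 + i * h1) (g * c1 + h * f1 + i * i1)"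
  unfolding vec_eq_iff forall_3 matrix_matrix_mult_def by (simp add: sum_3)

lemma M3_eq: "M3 a b c d e f g h i = M3 a1 b1 c1 d1 e1 f1 g1 h1 i1 \<longleftrightarrow>
  a = a1 \<and> b = b1 \<and> c = c1 \<and> d = d1 \<and> e = e1 \<and> f = f1 \<and> g = g1 \<and> h = h1 \<and> i = i1"
  unfolding vec_eq_iff forall_3 by simp

lemma mat1_M3: "(mat 1 :: 'a::{zero,one}^3^3) = M3 1 0 0 0 1 0 0 0 1"
  unfolding vec_eq_iff forall_3 by (simp add: mat_def)

lemma neg_M3: "- M3 a b c d e f g h i = M3 (-a) (-b) (-c) (-d) (-e) (-f) (-g) (-h) (-(i::'a::ab_group_add))"
  unfolding vec_eq_iff forall_3 by simp

lemma five_fix4: "(x::5) * 4 = x \<longleftrightarrow> x = 0" "4 * x = x \<longleftrightarrow> x = 0" "x = x * 4 \<longleftrightarrow> x = 0" "x = 4 * x \<longleftrightarrow> x = 0"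
  using five_cases[of x] by auto

lemma Z_lemma:
  fixes Z :: "5^3^3"
  assumes "Z ** Z = mat 1" "Z \<noteq> mat 1" "Z ** D1 = D1 ** Z" "Z ** D2 = D2 ** Z" "Z ** P3 = P3 ** Z"
  shows "Z = M3 4 0 0 0 4 0 0 0 4"
proof -
  obtain a b c d e f g h i where Z: "Z = M3 a b c d e f g h i" using M3_eta by blast
  have e1: "(Z ** D1)$r$k = (D1 ** Z)$r$k" for r k using assms(3) by simp
  have e2: "(Z ** D2)$r$k = (D2 ** Z)$r$k" for r k using assms(4) by simp
  have e3: "(Z ** P3)$r$k = (P3 ** Z)$r$k" for r k using assms(5) by simp
  have b: "b = 0" using e1[of 1 2] unfolding Z D1_def M3_mult M3_nth by (simp add: five_fix4)
  have c: "c = 0" using e1[of 1 3] unfolding Z D1_def M3_mult M3_nth by (simp add: five_fix4)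
  have d: "d = 0" using e1[of 2 1] unfolding Z D1_def M3_mult M3_nth by (simp add: five_fix4)
  have g: "g = 0" using e1[of 3 1] unfolding Z D1_def M3_mult M3_nth by (simp add: five_fix4)
  have f: "f = 0" using e2[of 2 3] unfolding Z D2_def M3_mult M3_nth by (simp add: five_fix4)
  have h: "h = 0" using e2[of 3 2] unfolding Z D2_def M3_mult M3_nth by (simp add: five_fix4)
  have ea: "e = a" using e3[of 2 1] unfolding Z P3_def M3_mult M3_nth by simp
  have ia: "i = e" using e3[of 3 2] unfolding Z P3_def M3_mult M3_nth by simp
  have sq: "M3 a 0 0 0 a 0 0 0 a ** M3 a 0 0 0 a 0 0 0 a = M3 1 0 0 0 1 0 0 0 1"
    using assms(1) unfolding Z b c d g f h ia ea mat1_M3 .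
  have aa: "a * a = 1" using arg_cong[OF sq, of "\<lambda>M. M$1$1"] unfolding M3_mult M3_nth by simp
  have an: "a \<noteq> 1" using assms(2) unfolding Z b c d g f h ia ea mat1_M3 by auto
  have "a = 4" using five_cases[of a] aa an by auto
  then show ?thesis unfolding Z b c d g f h ia ea by simp
qed

definition Sfix :: "5^3^3" where "Sfix = M3 2 1 1 1 1 2 1 2 1"

lemma S_form:
  fixes S :: "5^3^3"
  assumes "S ** P3 = P3 ** P3 ** S"
  shows "\<exists>x y z. S = M3 x y z y z x z x y"
proof -
  obtain a b c d e f g h i where S: "S = M3 a b c d e f g h i" using M3_eta by blast
  have q: "(S ** P3)$r$k = (P3 ** P3 ** S)$r$k" for r k using assms by simp
  have "b = d" using q[of 1 1] unfolding S P3_def M3_mult M3_nth by simp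
  moreover have "c = e" using q[of 1 2] unfolding S P3_def M3_mult M3_nth by simp
  moreover have "a = f" using q[of 1 3] unfolding S P3_def M3_mult M3_nth by simp
  moreover have "e = g" using q[of 2 1] unfolding S P3_def M3_mult M3_nth by simp
  moreover have "f = h" using q[of 2 2] unfolding S P3_def M3_mult M3_nth by simp
  moreover have "d = i" using q[of 2 3] unfolding S P3_def M3_mult M3_nth by simp
  ultimately have "S = M3 a b c b c a c a b" unfolding S by simp
  then show ?thesis by blast
qed

lemma S_sq:
  fixes x y z :: 5
  assumes "M3 x y z y z x z x y ** M3 x y z y z x z x y = mat 1"
  shows "(x,y,z) \<in> {(0,0,1),(0,0,4),(0,1,0),(0,4,0),(1,0,0),(4,0,0),(1,1,2),(1,2,1),(2,1,1),(3,4,4),(4,3,4),(4,4,3)}"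
  using five_cases[of x] five_cases[of y] five_cases[of z] assms unfolding M3_mult mat1_M3 M3_eq
  apply -
  apply (elim disjE)
  apply (simp_all only:)
  apply simp_all
  done

lemma S_lemma:
  fixes S :: "5^3^3"
  assumes "S ** P3 = P3 ** P3 ** S" "S ** S = mat 1"
    "(S ** D1) ** (S ** D1) ** (S ** D1) = mat 1"
    "(S ** D2) ** (S ** D2) ** (S ** D2) ** (S ** D2) ** (S ** D2) = mat 1"
  shows "S = Sfix"
proof -
  obtain x y z where S: "S = M3 x y z y z x z x y" using S_form assms(1) by blast
  have "(x,y,z) \<in> {(0,0,1),(0,0,4),(0,1,0),(0,4,0),(1,0,0),(4,0,0),(1,1,2),(1,2,1),(2,1,1),(3,4,4),(4,3,4),(4,4,3)}"
    using S_sq assms(2) S by simp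
  then show ?thesis using assms(3,4) unfolding S Sfix_def D1_def D2_def mat1_M3
    apply -
    apply (elim insertE emptyE)
    apply (simp_all add: M3_mult M3_eq)
    done
qed

definition gv :: "nat \<Rightarrow> 5^3" where
  "gv k = (if k = 1 then vector [1,0,0] else if k = 2 then vector [0,1,0] else if k = 3 then vector [0,0,1]
           else if k = 5 then vector [-1,-1,-1] else 0)"

definition n3 :: "3 \<Rightarrow> nat" where "n3 k = (if k = 1 then 1 else if k = 2 then 2 else 3)"

definition rho :: "(nat \<Rightarrow> nat) \<Rightarrow> 5^3^3" where
  "rho p = (\<chi> r k. gv (p (n3 k)) $ r - gv (p 4) $ r)"

lemma n3_simps [simp]: "n3 1 = 1" "n3 2 = 2" "n3 3 = 3" by (simp_all add: n3_def)

lemma gv_sum: "sum gv {1..5} = 0"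
proof -
  have "{1..5::nat} = {1,2,3,4,5}" by auto
  then show ?thesis by (simp add: gv_def vec_eq_iff forall_3 vector_3)
qed

lemma gv_sum_perm: assumes "p permutes {1..5}" shows "sum (gv \<circ> p) {1..5} = 0"
proof -
  have r: "sum (gv \<circ> p) {1..5} = sum gv (p ` {1..5})"
    by (rule sum.reindex[symmetric]) (rule permutes_inj_on[OF assms])
  have i: "p ` {1..5} = {1..5}" by (rule permutes_image[OF assms])
  show ?thesis unfolding r i by (rule gv_sum)
qed

lemma rho_col: "(rho p *v x) = (\<chi> r. (gv (p 1) $ r - gv (p 4) $ r) * x $ 1 + (gv (p 2) $ r - gv (p 4) $ r) * x $ 2 + (gv (p 3) $ r - gv (p 4) $ r) * x $ 3)"
  by (simp add: rho_def matrix_vector_mult_def sum_3)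

lemma gv_simps: "gv 1 = vector [1,0,0]" "gv 2 = vector [0,1,0]" "gv 3 = vector [0,0,1]"
  "gv 4 = 0" "gv 5 = vector [-1,-1,-1]" "gv (Suc 0) = vector [1,0,0]"
  by (simp_all add: gv_def)

lemma five_3: "(x::5) * 3 = - (x * 2)"
  using five_cases[of x] by auto

lemma rho_gv:
  assumes "p permutes {1..5}" "k \<in> {1..5}"
  shows "rho p *v gv k = gv (p k) - gv (p 4)"
proof -
  have "sum (gv \<circ> p) {1..5} = gv (p 1) + gv (p 2) + gv (p 3) + gv (p 4) + gv (p 5)"
    by (simp add: numeral_eq_Suc)
  then have s: "gv (p 1) + gv (p 2) + gv (p 3) + gv (p 4) + gv (p 5) = 0" using gv_sum_perm[OF assms(1)] by simp
  have k: "k = 1 \<or> k = 2 \<or> k = 3 \<or> k = 4 \<or> k = 5" using assms(2) by auto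
  have g5: "gv (p 5) = - (gv (p 1) + gv (p 2) + gv (p 3) + gv (p 4))"
    using s by (simp only: eq_neg_iff_add_eq_0 add.commute[of "gv (p 5)"])
  have five: "rho p *v gv 5 = gv (p 5) - gv (p 4)"
  proof -
    have "(rho p *v gv 5) $ r = (gv (p 5) - gv (p 4)) $ r" for r
    proof -
      define g1 g2 g3 g4 where "g1 = gv (p 1) $ r" "g2 = gv (p 2) $ r" "g3 = gv (p 3) $ r" "g4 = gv (p 4) $ r"
      have "(rho p *v gv 5) $ r = (g1 - g4) * (-1) + (g2 - g4) * (-1) + (g3 - g4) * (-1)"
        by (simp add: rho_col gv_simps vector_3 g1_g2_g3_g4_def)
      also have "\<dots> = - g1 - g2 - g3 + g4 * 3" by (simp add: algebra_simps)
      also have "\<dots> = - g1 - g2 - g3 - g4 * 2" by (simp add: five_3)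
      also have "\<dots> = - (g1 + g2 + g3 + g4) - g4" by (simp add: algebra_simps)
      also have "\<dots> = (gv (p 5) - gv (p 4)) $ r" by (simp add: g5 g1_g2_g3_g4_def)
      finally show ?thesis .
    qed
    then show ?thesis by (simp add: vec_eq_iff)
  qed
  have other: "rho p *v gv k = gv (p k) - gv (p 4)" if "k = 1 \<or> k = 2 \<or> k = 3 \<or> k = 4"
    using that by (auto simp: rho_col gv_simps vec_eq_iff forall_3 vector_3)
  show ?thesis using k five other by blast
qed

lemma mm_col: "((A::'a::semiring_1^3^3) ** B) $ r $ k = (A *v (\<chi> s. B $ s $ k)) $ r"
  by (simp add: matrix_matrix_mult_def matrix_vector_mult_def)

lemma n3_in: "n3 k \<in> {1,2,3}" using exhaust_3[of k] by auto

lemma rho_colv: "(\<chi> s. rho q $ s $ k) = gv (q (n3 k)) - gv (q 4)"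
  by (simp add: rho_def vec_eq_iff)

lemma rho_hom:
  assumes "p permutes {1..5}" "q permutes {1..5}"
  shows "rho (p \<circ> q) = rho p ** rho q"
proof -
  have q1: "q (n3 k) \<in> {1..5}" for k
  proof -
    have "n3 k \<in> {1..5}" using n3_in[of k] by auto
    then show ?thesis by (simp only: permutes_in_image[OF assms(2)])
  qed
  have q4: "q 4 \<in> {1..5}" by (simp only: permutes_in_image[OF assms(2)]) simp
  have "(rho p ** rho q) $ r $ k = rho (p \<circ> q) $ r $ k" for r k
  proof -
    have "(rho p ** rho q) $ r $ k = (rho p *v (gv (q (n3 k)) - gv (q 4))) $ r"
      by (simp only: mm_col rho_colv)
    also have "rho p *v (gv (q (n3 k)) - gv (q 4)) = rho p *v gv (q (n3 k)) - rho p *v gv (q 4)"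
      by (rule matrix_vector_mult_diff_distrib)
    also have "\<dots> = (gv (p (q (n3 k))) - gv (p 4)) - (gv (p (q 4)) - gv (p 4))"
      by (simp only: rho_gv[OF assms(1) q1] rho_gv[OF assms(1) q4])
    also have "\<dots> = gv ((p \<circ> q) (n3 k)) - gv ((p \<circ> q) 4)" by simp
    also have "\<dots> = (\<chi> s. rho (p \<circ> q) $ s $ k)" by (simp only: rho_colv)
    finally show ?thesis by simp
  qed
  then show ?thesis by (simp add: vec_eq_iff)
qed

lemma rho_id: "rho id = mat 1"
  unfolding vec_eq_iff forall_3 by (simp add: rho_def gv_def mat_def vector_3)

lemma gv_diff_pos:
  assumes "a \<in> {1..5}" "b \<in> {1..5}" "k \<in> {1,2,3}" "gv a - gv b = gv k"
  shows "a = k \<and> b = 4"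
proof -
  have "a = 1 \<or> a = 2 \<or> a = 3 \<or> a = 4 \<or> a = 5" "b = 1 \<or> b = 2 \<or> b = 3 \<or> b = 4 \<or> b = 5"
    "k = 1 \<or> k = 2 \<or> k = 3" using assms(1-3) by auto
  then show ?thesis using assms(4)
    apply -
    apply (elim disjE)
    apply (simp_all add: gv_def vec_eq_iff forall_3 vector_3)
    done
qed

lemma gv_diff_neg:
  assumes "a \<in> {1..5}" "b \<in> {1..5}" "k \<in> {1,2,3}" "gv a - gv b = - gv k"
  shows "a = 4 \<and> b = k"
proof -
  have "a = 1 \<or> a = 2 \<or> a = 3 \<or> a = 4 \<or> a = 5" "b = 1 \<or> b = 2 \<or> b = 3 \<or> b = 4 \<or> b = 5"
    "k = 1 \<or> k = 2 \<or> k = 3" using assms(1-3) by auto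
  then show ?thesis using assms(4)
    apply -
    apply (elim disjE)
    apply (simp_all add: gv_def vec_eq_iff forall_3 vector_3)
    done
qed

lemma rho_col_eq: "rho p = M \<Longrightarrow> gv (p (n3 k)) - gv (p 4) = (\<chi> r. M $ r $ k)"
  by (auto simp: rho_def vec_eq_iff)

lemma mat_col: "(\<chi> r. (mat 1::5^3^3) $ r $ k) = gv (n3 k)"
  using exhaust_3[of k] by (auto simp add: vec_eq_iff forall_3 mat_def gv_simps vector_3)

lemma negmat_col: "(\<chi> r. (- mat 1::5^3^3) $ r $ k) = - gv (n3 k)"
  using exhaust_3[of k] by (auto simp add: vec_eq_iff forall_3 mat_def gv_simps vector_3)



lemma rho_inj:
  assumes "p permutes {1..5}" "rho p = mat 1"
  shows "p = id"
proof -
  have pin: "p x \<in> {1..5}" if "x \<in> {1..5}" for x using permutes_in_image[OF assms(1)] that by auto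
  have n3in: "n3 k \<in> {1..5}" for k using n3_in[of k] by auto
  have c: "gv (p (n3 k)) - gv (p 4) = gv (n3 k)" for k
    using rho_col_eq[OF assms(2), of k] mat_col[of k] by simp
  have pk: "p (n3 k) = n3 k \<and> p 4 = 4" for k
    using gv_diff_pos[of "p (n3 k)" "p 4" "n3 k"] pin[OF n3in[of k]] pin[of 4] n3_in[of k] c[of k] by auto
  have 123: "p 1 = 1" "p 2 = 2" "p 3 = 3" "p 4 = 4" using pk[of 1] pk[of 2] pk[of 3] by auto
  have ne: "p 5 \<noteq> p j" if "j \<noteq> 5" for j
    using permutes_inj[OF assms(1)] that by (metis injD)
  have "p 5 \<in> {1..5}" by (rule pin) simp
  then have "p 5 = 1 \<or> p 5 = 2 \<or> p 5 = 3 \<or> p 5 = 4 \<or> p 5 = 5" by auto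
  then have "p 5 = 5" using ne[of 1] ne[of 2] ne[of 3] ne[of 4] 123 by auto
  show "p = id"
  proof
    fix x show "p x = id x"
    proof (cases "x \<in> {1..5}")
      case True then have "x = 1 \<or> x = 2 \<or> x = 3 \<or> x = 4 \<or> x = 5" by auto
      then show ?thesis using 123 \<open>p 5 = 5\<close> by auto
    next
      case False then show ?thesis using permutes_not_in[OF assms(1)] by simp
    qed
  qed
qed

lemma rho_not_neg:
  assumes "p permutes {1..5}" shows "rho p \<noteq> - mat 1"
proof
  assume h: "rho p = - mat 1"
  have pin: "p x \<in> {1..5}" if "x \<in> {1..5}" for x using permutes_in_image[OF assms(1)] that by auto
  have n3in: "n3 k \<in> {1..5}" for k using n3_in[of k] by auto
  have c: "gv (p (n3 k)) - gv (p 4) = - gv (n3 k)" for k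
    using rho_col_eq[OF h, of k] negmat_col[of k] by simp
  have "p 4 = n3 k" for k
    using gv_diff_neg[of "p (n3 k)" "p 4" "n3 k"] pin[OF n3in[of k]] pin[of 4] n3_in[of k] c[of k] by auto
  from this[of 1] this[of 2] show False by simp
qed

definition pa1 :: "nat \<Rightarrow> nat" where "pa1 = Transposition.transpose 1 2 \<circ> Transposition.transpose 3 4"
definition pa2 :: "nat \<Rightarrow> nat" where "pa2 = Transposition.transpose 1 3 \<circ> Transposition.transpose 2 4"
definition pc :: "nat \<Rightarrow> nat" where "pc = Transposition.transpose 1 2 \<circ> Transposition.transpose 2 3"
definition ps :: "nat \<Rightarrow> nat" where "ps = Transposition.transpose 1 2 \<circ> Transposition.transpose 4 5"

lemmas pdefs = pa1_def pa2_def pc_def ps_def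

lemma perms_in_A5: "pa1 \<in> carrier (alt_group 5)" "pa2 \<in> carrier (alt_group 5)"
  "pc \<in> carrier (alt_group 5)" "ps \<in> carrier (alt_group 5)"
  by (simp_all add: pdefs alt_group_carrier permutes_compose permutes_swap_id evenperm_comp
      permutation_swap_id evenperm_swap)

lemma perm_eqI:
  assumes "f 1 = g 1" "f 2 = g 2" "f 3 = g 3" "f 4 = g 4" "f 5 = g 5"
    "\<And>x. x \<noteq> 1 \<Longrightarrow> x \<noteq> 2 \<Longrightarrow> x \<noteq> 3 \<Longrightarrow> x \<noteq> 4 \<Longrightarrow> x \<noteq> 5 \<Longrightarrow> f x = (g x::nat)"
  shows "f = g"
proof
  fix x show "f x = g x" using assms by (cases "x \<in> {1,2,3,4,5}") auto
qed

lemma perm_rels: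
  "pa1 \<circ> pa1 = id" "pa2 \<circ> pa2 = id" "pa1 \<circ> pa2 = pa2 \<circ> pa1"
  "pc \<circ> pa1 = pa1 \<circ> pa2 \<circ> pc" "pc \<circ> pa2 = pa1 \<circ> pc" "pc \<circ> pc \<circ> pc = id"
  "ps \<circ> ps = id" "ps \<circ> pc = pc \<circ> pc \<circ> ps"
  "ps \<circ> pa1 \<circ> (ps \<circ> pa1) \<circ> (ps \<circ> pa1) = id"
  "ps \<circ> pa2 \<circ> (ps \<circ> pa2) \<circ> (ps \<circ> pa2) \<circ> (ps \<circ> pa2) \<circ> (ps \<circ> pa2) = id"
  "pa1 \<circ> (pa1 \<circ> pa2) = pa2" "pa2 \<circ> (pa1 \<circ> pa2) = pa1"
  "pa1 \<circ> pa2 \<circ> pa1 = pa2" "pa1 \<circ> pa2 \<circ> pa2 = pa1" "pa1 \<circ> pa2 \<circ> (pa1 \<circ> pa2) = id"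
  by (rule perm_eqI; simp add: pdefs Transposition.transpose_def)+

lemma perm_neI: "f (1::nat) \<noteq> g 1 \<Longrightarrow> f \<noteq> g" by auto

lemma perm_ne: "pa1 \<noteq> id" "pc \<noteq> id" "ps \<circ> pa2 \<noteq> id" "pa2 \<noteq> id" "pa1 \<circ> pa2 \<noteq> id"
  "pa1 \<noteq> pa2" "pa1 \<noteq> pa1 \<circ> pa2" "pa2 \<noteq> pa1 \<circ> pa2"
  by (rule perm_neI; simp add: pdefs Transposition.transpose_def)+

lemma rho_perms: "rho pa1 = M3 0 1 0 1 0 0 4 4 4" "rho pa2 = M3 0 0 1 4 4 4 1 0 0"
  "rho pc = M3 0 0 1 1 0 0 0 1 0" "rho ps = M3 1 2 1 2 1 1 1 1 2"
  unfolding vec_eq_iff forall_3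
  by (simp_all add: rho_def pdefs gv_def Transposition.transpose_def vector_3)

definition Bm :: "5^3^3" where "Bm = M3 2 3 2 2 2 3 3 2 2"
definition Bi :: "5^3^3" where "Bi = M3 4 4 0 0 4 4 4 0 4"

lemma Bm_Bi: "Bm ** Bi = mat 1" "Bi ** Bm = mat 1"
  by (simp_all add: Bm_def Bi_def M3_mult mat1_M3 M3_eq)

definition Phi0 :: "(nat \<Rightarrow> nat) \<Rightarrow> 5^3^3" where "Phi0 p = Bi ** rho p ** Bm"

lemma Phi0_perms: "Phi0 pa1 = D1" "Phi0 pa2 = D2" "Phi0 pc = P3" "Phi0 ps = Sfix"
  by (simp_all add: Phi0_def rho_perms Bm_def Bi_def D1_def D2_def P3_def Sfix_def M3_mult M3_eq)

lemma GL_carrier: "carrier GL3F5 = {A. invertible A}" by (simp add: GL3F5_def)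
lemma GL_mult [simp]: "x \<otimes>\<^bsub>GL3F5\<^esub> y = x ** y" by (simp add: GL3F5_def)
lemma GL_one [simp]: "\<one>\<^bsub>GL3F5\<^esub> = mat 1" by (simp add: GL3F5_def)

lemma invertible_I: "invertible (mat 1 :: 5^3^3)"
  unfolding invertible_def by (rule exI[of _ "mat 1"]) simp

lemma GL_group: "group GL3F5"
proof (rule groupI)
  show "x \<otimes>\<^bsub>GL3F5\<^esub> y \<in> carrier GL3F5" if "x \<in> carrier GL3F5" "y \<in> carrier GL3F5" for x y
    using that by (simp add: GL_carrier invertible_mult)
  show "\<one>\<^bsub>GL3F5\<^esub> \<in> carrier GL3F5" by (simp add: GL_carrier invertible_I)
  show "x \<otimes>\<^bsub>GL3F5\<^esub> y \<otimes>\<^bsub>GL3F5\<^esub> z = x \<otimes>\<^bsub>GL3F5\<^esub> (y \<otimes>\<^bsub>GL3F5\<^esub> z)" for x y z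
    by (simp add: matrix_mul_assoc)
  show "\<one>\<^bsub>GL3F5\<^esub> \<otimes>\<^bsub>GL3F5\<^esub> x = x" for x by simp
  show "\<exists>y\<in>carrier GL3F5. y \<otimes>\<^bsub>GL3F5\<^esub> x = \<one>\<^bsub>GL3F5\<^esub>" if "x \<in> carrier GL3F5" for x
  proof -
    have "invertible x" using that by (simp add: GL_carrier)
    then obtain B where B: "x ** B = mat 1" "B ** x = mat 1" unfolding invertible_def by blast
    then have "invertible B" unfolding invertible_def by blast
    then show ?thesis using B by (auto simp: GL_carrier)
  qed
qed

lemma GL_inv:
  assumes "g ** g' = mat 1" "g' ** g = mat 1"
  shows "inv\<^bsub>GL3F5\<^esub> g = g'"
proof -
  have "g \<in> carrier GL3F5" "g' \<in> carrier GL3F5" using assms by (auto simp: GL_carrier invertible_def)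
  then show ?thesis using group.inv_equality[OF GL_group, of g' g] assms by simp
qed

lemma A5C2_group: "group A5xC2"
  unfolding A5xC2_def by (rule DirProd_group[OF alt_group_is_group group_integer_mod_group])

lemma A5C2_carrier: "carrier A5xC2 = carrier (alt_group 5) \<times> {0,1}"
  by (auto simp: A5xC2_def carrier_integer_mod_group)

lemma A5C2_mult: "(x,k) \<otimes>\<^bsub>A5xC2\<^esub> (y,l) = (x \<circ> y, (k + l) mod 2)"
  by (simp add: A5xC2_def alt_group_mult)

lemma A5C2_one: "\<one>\<^bsub>A5xC2\<^esub> = (id, 0)"
  by (simp add: A5xC2_def alt_group_one)

lemma A5_monoid: "monoid (alt_group 5)" by (rule group.is_monoid[OF alt_group_is_group])

lemma A5_closed: "x \<in> carrier (alt_group 5) \<Longrightarrow> y \<in> carrier (alt_group 5) \<Longrightarrow> x \<circ> y \<in> carrier (alt_group 5)"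
  using monoid.m_closed[OF A5_monoid, of x y] by (simp add: alt_group_mult)

lemma A5_id: "id \<in> carrier (alt_group 5)"
  using monoid.one_closed[OF A5_monoid] by (simp add: alt_group_one)

lemma A5_perm: "x \<in> carrier (alt_group 5) \<Longrightarrow> x permutes {1..5}"
  by (simp add: alt_group_carrier)

lemma mat_comm: "(M::'a::comm_ring_1^3^3) ** mat u = mat u ** M"
  unfolding vec_eq_iff matrix_matrix_mult_def mat_def by (simp add: sum_3 forall_3 algebra_simps)

lemma mat4_sq: "(mat 4 :: 5^3^3) ** mat 4 = mat 1"
proof -
  have "(4::5) * 4 = 1" by simp
  then show ?thesis by (simp only: mat_mult_scal)
qed

lemma mat4_sq': "(mat 4 :: 5^3^3) ** (mat 4 ** M) = M"
  by (simp add: matrix_mul_assoc mat4_sq)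

lemma Phi0_hom: "x permutes {1..5} \<Longrightarrow> y permutes {1..5} \<Longrightarrow> Phi0 (x \<circ> y) = Phi0 x ** Phi0 y"
proof -
  assume a: "x permutes {1..5}" "y permutes {1..5}"
  have "Phi0 x ** Phi0 y = Bi ** rho x ** (Bm ** Bi) ** rho y ** Bm"
    by (simp add: Phi0_def matrix_mul_assoc)
  also have "\<dots> = Phi0 (x \<circ> y)" by (simp add: Bm_Bi Phi0_def rho_hom[OF a] matrix_mul_assoc)
  finally show ?thesis by simp
qed

lemma Phi0_id: "Phi0 id = mat 1"
  by (simp add: Phi0_def rho_id Bm_Bi)

lemma rho_from_Phi0: "rho x = Bm ** Phi0 x ** Bi"
proof -
  have "Bm ** Phi0 x ** Bi = (Bm ** Bi) ** rho x ** (Bm ** Bi)" by (simp add: Phi0_def matrix_mul_assoc)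
  then show ?thesis by (simp add: Bm_Bi)
qed

definition phi0 :: "(nat \<Rightarrow> nat) \<times> int \<Rightarrow> 5^3^3" where
  "phi0 z = (if snd z = 0 then Phi0 (fst z) else mat 4 ** Phi0 (fst z))"

lemma phi0_hom:
  assumes "z \<in> carrier A5xC2" "w \<in> carrier A5xC2"
  shows "phi0 (z \<otimes>\<^bsub>A5xC2\<^esub> w) = phi0 z ** phi0 w"
proof -
  obtain x k y l where z: "z = (x,k)" and w: "w = (y,l)" by (cases z, cases w) auto
  have xy0: "x \<in> carrier (alt_group 5)" "y \<in> carrier (alt_group 5)" "k \<in> {0,1}" "l \<in> {0,1}"
    using assms by (simp_all add: z w A5C2_carrier)
  have xy: "x permutes {1..5}" "y permutes {1..5}" "k \<in> {0,1}" "l \<in> {0,1}"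
    using A5_perm[OF xy0(1)] A5_perm[OF xy0(2)] xy0(3,4) by blast+
  have h: "Phi0 (x \<circ> y) = Phi0 x ** Phi0 y" by (rule Phi0_hom[OF xy(1,2)])
  have "k = 0 \<and> l = 0 \<or> k = 0 \<and> l = 1 \<or> k = 1 \<and> l = 0 \<or> k = 1 \<and> l = 1" using xy(3,4) by auto
  then show ?thesis
  proof (elim disjE conjE)
    assume "k = 0" "l = 0" then show ?thesis by (simp add: z w A5C2_mult phi0_def h)
  next
    assume "k = 0" "l = 1" then show ?thesis by (simp add: z w A5C2_mult phi0_def h scal_comm[of "Phi0 x" 4 "Phi0 y"])
  next
    assume "k = 1" "l = 0" then show ?thesis by (simp add: z w A5C2_mult phi0_def h matrix_mul_assoc)
  next
    assume "k = 1" "l = 1"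
    then have "phi0 z ** phi0 w = (mat 4 ** Phi0 x) ** (mat 4 ** Phi0 y)"
      by (simp add: z w phi0_def)
    also have "\<dots> = mat 4 ** (Phi0 x ** (mat 4 ** Phi0 y))" by (simp only: matrix_mul_assoc)
    also have "\<dots> = mat 4 ** (mat 4 ** (Phi0 x ** Phi0 y))" by (simp only: scal_comm[of "Phi0 x" 4 "Phi0 y"])
    also have "\<dots> = Phi0 (x \<circ> y)" by (simp only: mat4_sq' h)
    finally show ?thesis using \<open>k = 1\<close> \<open>l = 1\<close> by (simp add: z w A5C2_mult phi0_def)
  qed
qed

lemma phi0_carrier:
  assumes "z \<in> carrier A5xC2" shows "phi0 z \<in> carrier GL3F5"
proof -
  obtain x k where z: "z = (x,k)" by (cases z) auto
  have x0: "x \<in> carrier (alt_group 5)" using assms by (simp add: z A5C2_carrier)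
  have x: "x permutes {1..5}" by (rule A5_perm[OF x0])
  have ix: "inv_into UNIV x permutes {1..5}" by (rule permutes_inv[OF x])
  have "Phi0 x ** Phi0 (inv_into UNIV x) = mat 1" "Phi0 (inv_into UNIV x) ** Phi0 x = mat 1"
    using Phi0_hom[OF x ix] Phi0_hom[OF ix x] permutes_inv_o[OF x] Phi0_id by auto
  then have i: "invertible (Phi0 x)" unfolding invertible_def by blast
  have "invertible (mat 4 :: 5^3^3)" unfolding invertible_def using mat4_sq by blast
  then show ?thesis using i by (auto simp: GL_carrier phi0_def z invertible_mult)
qed

lemma phi0_group_hom: "group_hom A5xC2 GL3F5 phi0"
  unfolding group_hom_def group_hom_axioms_def
  by (auto simp: A5C2_group GL_group intro!: homI phi0_carrier phi0_hom)

lemma phi0_ker: "kernel A5xC2 GL3F5 phi0 = {\<one>\<^bsub>A5xC2\<^esub>}"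
proof -
  have A: "z = (id, 0)" if "z \<in> carrier A5xC2" "phi0 z = mat 1" for z
  proof -
    obtain x k where z: "z = (x,k)" by (cases z) auto
    have x0: "x \<in> carrier (alt_group 5)" "k \<in> {0,1}" using that(1) by (simp_all add: z A5C2_carrier)
    have x: "x permutes {1..5}" "k \<in> {0,1}" using A5_perm[OF x0(1)] x0(2) by blast+
    show ?thesis
    proof (cases "k = 0")
      case True
      then have "Phi0 x = mat 1" using that by (simp add: z phi0_def)
      then have "rho x = mat 1" by (simp add: rho_from_Phi0 Bm_Bi)
      then show ?thesis using rho_inj[OF x(1)] True z by simp
    next
      case False
      then have "mat 4 ** Phi0 x = mat 1" using that by (simp add: z phi0_def)
      then have "mat 4 ** (mat 4 ** Phi0 x) = mat 4" by simp
      then have "Phi0 x = mat 4" by (simp add: matrix_mul_assoc mat4_sq)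
      then have "rho x = mat 4" by (simp add: rho_from_Phi0 Bm_Bi scal_comm matrix_mul_assoc[symmetric])
      moreover have "(mat 4 :: 5^3^3) = - mat 1" by (simp add: vec_eq_iff mat_def)
      ultimately show ?thesis using rho_not_neg[OF x(1)] by simp
    qed
  qed
  have B: "phi0 (id, 0) = mat 1" by (simp add: phi0_def Phi0_id)
  have C: "(id, 0) \<in> carrier A5xC2" by (simp add: A5C2_carrier A5_id)
  have "{x \<in> carrier A5xC2. phi0 x = mat 1} = {(id,0)}"
  proof (rule equalityI)
    show "{x \<in> carrier A5xC2. phi0 x = mat 1} \<subseteq> {(id,0)}" using A by blast
    show "{(id,0)} \<subseteq> {x \<in> carrier A5xC2. phi0 x = mat 1}" using B C by blast
  qed
  then show ?thesis unfolding kernel_def A5C2_one GL_one .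
qed

lemma phi0_inj: "inj_on phi0 (carrier A5xC2)"
  using group_hom.trivial_ker_imp_inj[OF phi0_group_hom phi0_ker] .

definition H0 :: "(5^3^3) set" where "H0 = phi0 ` carrier A5xC2"

lemma H0_subgroup: "subgroup H0 GL3F5"
  unfolding H0_def by (rule group_hom.img_is_subgroup[OF phi0_group_hom])

lemma H0_iso: "GL3F5\<lparr>carrier := H0\<rparr> \<cong> A5xC2"
proof -
  have h: "phi0 \<in> hom A5xC2 (GL3F5\<lparr>carrier := H0\<rparr>)"
    by (rule homI) (auto simp: H0_def phi0_hom)
  have b: "bij_betw phi0 (carrier A5xC2) (carrier (GL3F5\<lparr>carrier := H0\<rparr>))"
    by (auto simp: bij_betw_def H0_def phi0_inj)
  have "phi0 \<in> iso A5xC2 (GL3F5\<lparr>carrier := H0\<rparr>)"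
    unfolding iso_def using h b by blast
  then have "A5xC2 \<cong> GL3F5\<lparr>carrier := H0\<rparr>" by (rule is_isoI)
  then show ?thesis by (rule group.iso_sym[OF A5C2_group])
qed

lemma A5_fin: "finite (carrier (alt_group 5))"
  by (rule finite_subset[of _ "{p. p permutes {1..(5::nat)}}"]) (auto simp: alt_group_carrier finite_permutations)

lemma A5_card: "card (carrier (alt_group 5)) = 60"
proof -
  have "2 * card (carrier (alt_group 5)) = fact 5" by (rule alt_group_card_carrier) simp
  moreover have "fact 5 = (120::nat)" by (simp add: numeral_eq_Suc)
  ultimately show ?thesis by simp
qed

lemma dvd3: assumes "(n::nat) dvd 3" "n \<noteq> 1" shows "n = 3"
proof -
  have "n \<le> 3" using dvd_imp_le[OF assms(1)] by simp
  moreover have "n \<noteq> 0"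
  proof
    assume "n = 0" then show False using assms(1) by simp
  qed
  moreover have "n \<noteq> 2"
  proof
    assume "n = 2" then have "(2::nat) dvd 3" using assms(1) by simp
    then show False by presburger
  qed
  ultimately show ?thesis using assms(2) by linarith
qed

lemma dvd5: assumes "(n::nat) dvd 5" "n \<noteq> 1" shows "n = 5"
proof -
  have "n \<le> 5" using dvd_imp_le[OF assms(1)] by simp
  moreover have "n \<noteq> 0"
  proof
    assume "n = 0" then show False using assms(1) by simp
  qed
  moreover have "n \<noteq> 2"
  proof
    assume "n = 2" then have "(2::nat) dvd 5" using assms(1) by simp
    then show False by presburger
  qed
  moreover have "n \<noteq> 3"
  proof
    assume "n = 3" then have "(3::nat) dvd 5" using assms(1) by simp
    then show False by presburger
  qed
  moreover have "n \<noteq> 4"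
  proof
    assume "n = 4" then have "(4::nat) dvd 5" using assms(1) by simp
    then show False by presburger
  qed
  ultimately show ?thesis using assms(2) by linarith
qed

lemma A5_gen:
  assumes T: "subgroup T (alt_group 5)" and mem: "pa1 \<in> T" "pa2 \<in> T" "pc \<in> T" "ps \<in> T"
  shows "T = carrier (alt_group 5)"
proof -
  interpret G: group "alt_group 5" by (rule alt_group_is_group)
  have Tsub: "T \<subseteq> carrier (alt_group 5)" using subgroup.subset[OF T] .
  have d60: "card T dvd 60"
    using G.lagrange[OF T] A5_card unfolding order_def by (metis dvd_triv_right)
  define GT where "GT = (alt_group 5)\<lparr>carrier := T\<rparr>"
  have GTg: "group GT" unfolding GT_def by (rule subgroup.subgroup_is_group[OF T alt_group_is_group])
  interpret H: group GT by (rule GTg)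
  have cGT: "carrier GT = T" by (simp add: GT_def)
  have mGT: "x \<otimes>\<^bsub>GT\<^esub> y = x \<circ> y" for x y by (simp add: GT_def alt_group_mult)
  have oGT: "\<one>\<^bsub>GT\<^esub> = id" by (simp add: GT_def alt_group_one)
  have ordGT: "order GT = card T" by (simp add: order_def cGT)
  have Tcl: "x \<in> T \<Longrightarrow> y \<in> T \<Longrightarrow> x \<circ> y \<in> T" for x y using H.m_closed[of x y] by (simp add: cGT mGT)
  have idT: "id \<in> T" using H.one_closed by (simp add: cGT oGT)
  have "pc [^]\<^bsub>GT\<^esub> (3::nat) = \<one>\<^bsub>GT\<^esub>" by (simp add: numeral_3_eq_3 mGT oGT perm_rels)
  then have "H.ord pc dvd 3" using H.pow_eq_id[of pc 3] mem(3) cGT by simp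
  moreover have "H.ord pc \<noteq> 1" using H.ord_eq_1[of pc] mem(3) cGT oGT perm_ne(2) by simp
  ultimately have "H.ord pc = 3" by (rule dvd3)
  then have d3: "3 dvd card T" using H.ord_dvd_group_order[of pc] mem(3) cGT ordGT by simp
  define q where "q = ps \<circ> pa2"
  have qT: "q \<in> T" unfolding q_def by (rule Tcl[OF mem(4) mem(2)])
  have "q [^]\<^bsub>GT\<^esub> (5::nat) = \<one>\<^bsub>GT\<^esub>"
    by (simp add: numeral_eq_Suc mGT oGT q_def perm_rels(10))
  then have "H.ord q dvd 5" using H.pow_eq_id[of q 5] qT cGT by simp
  moreover have "H.ord q \<noteq> 1" using H.ord_eq_1[of q] qT cGT oGT perm_ne(3) q_def by simp
  ultimately have "H.ord q = 5" by (rule dvd5)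
  then have d5: "5 dvd card T" using H.ord_dvd_group_order[of q] qT cGT ordGT by simp
  define V where "V = {id, pa1, pa2, pa1 \<circ> pa2}"
  have VT: "V \<subseteq> carrier GT" using idT mem Tcl[OF mem(1) mem(2)] by (auto simp: V_def cGT)
  have sq: "a \<circ> a = id" if "a \<in> V" for a
    using that perm_rels(1,2,15) by (auto simp: V_def)
  have table: "pa2 \<circ> pa1 = pa1 \<circ> pa2" using perm_rels(3) by simp
  have Vsub: "subgroup V GT"
  proof (rule H.subgroupI)
    show "V \<subseteq> carrier GT" by (rule VT)
    show "V \<noteq> {}" by (simp add: V_def)
    show "inv\<^bsub>GT\<^esub> a \<in> V" if "a \<in> V" for a
    proof -
      have "a \<in> carrier GT" using that VT by blast
      then have "inv\<^bsub>GT\<^esub> a = a" using H.inv_equality[of a a] sq[OF that] by (simp add: mGT oGT)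
      then show ?thesis using that by simp
    qed
    show "a \<otimes>\<^bsub>GT\<^esub> b \<in> V" if "a \<in> V" "b \<in> V" for a b
      using that perm_rels(1,2,11,12,13,14,15) table unfolding mGT V_def by auto
  qed
  have "card V = 4"
    using perm_ne(1,4,5,6,7,8) unfolding V_def
    by (simp add: not_sym[OF perm_ne(1)] not_sym[OF perm_ne(4)] not_sym[OF perm_ne(5)])
  then have d4: "4 dvd card T" using H.lagrange[OF Vsub] ordGT by (metis dvd_triv_right)
  have "60 dvd card T" using d3 d4 d5 by presburger
  then have "card T = 60" using d60 by (simp add: dvd_antisym)
  then show ?thesis using card_subset_eq[OF A5_fin Tsub] A5_card by simp
qed

lemma GLH_mult [simp]: "x \<otimes>\<^bsub>GL3F5\<lparr>carrier := H\<rparr>\<^esub> y = x ** y" by (simp add: GL3F5_def)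
lemma GLH_one [simp]: "\<one>\<^bsub>GL3F5\<lparr>carrier := H\<rparr>\<^esub> = mat 1" by (simp add: GL3F5_def)

lemma M3_mat4: "M3 4 0 0 0 4 0 0 0 4 = (mat 4 :: 5^3^3)"
  unfolding vec_eq_iff forall_3 by (simp add: mat_def)

lemma uniq:
  assumes H: "subgroup H GL3F5" and iso: "GL3F5\<lparr>carrier := H\<rparr> \<cong> A5xC2"
  shows "\<exists>g\<in>carrier GL3F5. H = conj_subset GL3F5 g H0"
proof -
  have Hg: "group (GL3F5\<lparr>carrier := H\<rparr>)" by (rule subgroup.subgroup_is_group[OF H GL_group])
  have "A5xC2 \<cong> GL3F5\<lparr>carrier := H\<rparr>" by (rule group.iso_sym[OF Hg iso])
  then obtain f where f: "f \<in> iso A5xC2 (GL3F5\<lparr>carrier := H\<rparr>)" unfolding is_iso_def by blast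
  have hom: "f \<in> hom A5xC2 (GL3F5\<lparr>carrier := H\<rparr>)" and bij: "bij_betw f (carrier A5xC2) H"
    using f by (auto simp: iso_def)
  have fmul: "f (z \<otimes>\<^bsub>A5xC2\<^esub> w) = f z ** f w" if "z \<in> carrier A5xC2" "w \<in> carrier A5xC2" for z w
    using hom_mult[OF hom that] by simp
  have finj: "inj_on f (carrier A5xC2)" using bij by (simp add: bij_betw_def)
  have fone: "f (id, 0) = mat 1" using hom_one[OF hom A5C2_group Hg] by (simp add: A5C2_one)
  have A5c: "(x, 0) \<in> carrier A5xC2" if "x \<in> carrier (alt_group 5)" for x
    using that by (simp add: A5C2_carrier)
  have Z5c: "(id, 1) \<in> carrier A5xC2" by (simp add: A5C2_carrier A5_id)
  define Phi where "Phi x = f (x, 0)" for x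
  have Phimul: "Phi (x \<circ> y) = Phi x ** Phi y" if "x \<in> carrier (alt_group 5)" "y \<in> carrier (alt_group 5)" for x y
    using fmul[OF A5c[OF that(1)] A5c[OF that(2)]] by (simp add: Phi_def A5C2_mult)
  have Phiid: "Phi id = mat 1" by (simp add: Phi_def fone)
  note mem = perms_in_A5
  have rel: "Phi x ** Phi y = Phi z" if "x \<in> carrier (alt_group 5)" "y \<in> carrier (alt_group 5)" "x \<circ> y = z" for x y z
    using Phimul[OF that(1,2)] that(3) by simp
  have m12: "pa1 \<circ> pa2 \<in> carrier (alt_group 5)" by (rule A5_closed[OF mem(1,2)])
  have mcc: "pc \<circ> pc \<in> carrier (alt_group 5)" by (rule A5_closed[OF mem(3,3)])
  have ms1: "ps \<circ> pa1 \<in> carrier (alt_group 5)" by (rule A5_closed[OF mem(4,1)])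
  have ms2: "ps \<circ> pa2 \<in> carrier (alt_group 5)" by (rule A5_closed[OF mem(4,2)])
  define A1 where "A1 = Phi pa1"
  define A2 where "A2 = Phi pa2"
  define C where "C = Phi pc"
  define S where "S = Phi ps"
  have h1: "A1 ** A1 = mat 1" using rel[OF mem(1,1) perm_rels(1)] Phiid by (simp add: A1_def)
  have h2: "A2 ** A2 = mat 1" using rel[OF mem(2,2) perm_rels(2)] Phiid by (simp add: A2_def)
  have h3: "A1 ** A2 = A2 ** A1"
    using rel[OF mem(1,2) refl] rel[OF mem(2,1) refl] perm_rels(3) by (simp add: A1_def A2_def)
  have p12: "Phi (pa1 \<circ> pa2) = A1 ** A2" using rel[OF mem(1,2) refl] by (simp add: A1_def A2_def)
  have h4: "C ** A1 = A1 ** A2 ** C"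
    using rel[OF mem(3,1) perm_rels(4)] rel[OF m12 mem(3) refl] p12 by (simp add: A1_def C_def)
  have h5: "C ** A2 = A1 ** C"
    using rel[OF mem(3,2) perm_rels(5)] rel[OF mem(1,3) refl] by (simp add: A1_def A2_def C_def)
  have pcc: "Phi (pc \<circ> pc) = C ** C" using rel[OF mem(3,3) refl] by (simp add: C_def)
  have h6: "C ** C ** C = mat 1"
    using rel[OF mcc mem(3) perm_rels(6)] pcc Phiid by (simp add: C_def)
  have h7: "A1 \<noteq> mat 1"
  proof
    assume "A1 = mat 1"
    then have "f (pa1, 0) = f (id, 0)" using fone by (simp add: A1_def Phi_def)
    then have "(pa1, 0) = ((id, 0) :: (nat \<Rightarrow> nat) \<times> int)"
      by (rule inj_onD[OF finj _ A5c[OF mem(1)] A5c[OF A5_id]])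
    then show False using perm_ne(1) by simp
  qed
  obtain g g' where gg: "g ** g' = mat 1" "g' ** g = mat 1"
    and nA1: "A1 ** g = g ** D1" and nA2: "A2 ** g = g ** D2" and nC: "C ** g = g ** P3"
    using normalize[OF h1 h2 h3 h4 h5 h6 h7] by blast
  define Psi where "Psi M = g' ** M ** g" for M
  have Psimul: "Psi (M ** N) = Psi M ** Psi N" for M N
  proof -
    have "Psi M ** Psi N = g' ** M ** (g ** g') ** N ** g" by (simp add: Psi_def matrix_mul_assoc)
    then show ?thesis by (simp add: gg Psi_def matrix_mul_assoc)
  qed
  have Psi1: "Psi (mat 1) = mat 1" by (simp add: Psi_def gg)
  have PsiA1: "Psi A1 = D1"
  proof -
    have "Psi A1 = g' ** (A1 ** g)" by (simp add: Psi_def matrix_mul_assoc)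
    also have "\<dots> = (g' ** g) ** D1" by (simp add: nA1 matrix_mul_assoc)
    finally show ?thesis by (simp add: gg)
  qed
  have PsiA2: "Psi A2 = D2"
  proof -
    have "Psi A2 = g' ** (A2 ** g)" by (simp add: Psi_def matrix_mul_assoc)
    also have "\<dots> = (g' ** g) ** D2" by (simp add: nA2 matrix_mul_assoc)
    finally show ?thesis by (simp add: gg)
  qed
  have PsiC: "Psi C = P3"
  proof -
    have "Psi C = g' ** (C ** g)" by (simp add: Psi_def matrix_mul_assoc)
    also have "\<dots> = (g' ** g) ** P3" by (simp add: nC matrix_mul_assoc)
    finally show ?thesis by (simp add: gg)
  qed
  have s1: "S ** C = C ** C ** S"
    using rel[OF mem(4,3) perm_rels(8)] rel[OF mcc mem(4) refl] pcc by (simp add: S_def C_def)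
  have s2: "S ** S = mat 1" using rel[OF mem(4,4) perm_rels(7)] Phiid by (simp add: S_def)
  have psa1: "Phi (ps \<circ> pa1) = S ** A1" using rel[OF mem(4,1) refl] by (simp add: S_def A1_def)
  have psa2: "Phi (ps \<circ> pa2) = S ** A2" using rel[OF mem(4,2) refl] by (simp add: S_def A2_def)
  have s3: "(S ** A1) ** (S ** A1) ** (S ** A1) = mat 1"
  proof -
    have "Phi (ps \<circ> pa1 \<circ> (ps \<circ> pa1)) = (S ** A1) ** (S ** A1)" using rel[OF ms1 ms1 refl] psa1 by simp
    moreover have "ps \<circ> pa1 \<circ> (ps \<circ> pa1) \<in> carrier (alt_group 5)" by (rule A5_closed[OF ms1 ms1])
    ultimately show ?thesis using rel[OF _ ms1 perm_rels(9)] psa1 Phiid by simp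
  qed
  have s4: "(S ** A2) ** (S ** A2) ** (S ** A2) ** (S ** A2) ** (S ** A2) = mat 1"
  proof -
    define q where "q = ps \<circ> pa2"
    have q: "q \<in> carrier (alt_group 5)" "Phi q = S ** A2" using ms2 psa2 by (simp_all add: q_def)
    have q2: "q \<circ> q \<in> carrier (alt_group 5)" "Phi (q \<circ> q) = (S ** A2) ** (S ** A2)"
      using A5_closed[OF q(1) q(1)] rel[OF q(1) q(1) refl] q(2) by simp_all
    have q3: "q \<circ> q \<circ> q \<in> carrier (alt_group 5)" "Phi (q \<circ> q \<circ> q) = (S ** A2) ** (S ** A2) ** (S ** A2)"
      using A5_closed[OF q2(1) q(1)] rel[OF q2(1) q(1) refl] q2(2) q(2) by simp_all
    have q4: "q \<circ> q \<circ> q \<circ> q \<in> carrier (alt_group 5)"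
      "Phi (q \<circ> q \<circ> q \<circ> q) = (S ** A2) ** (S ** A2) ** (S ** A2) ** (S ** A2)"
      using A5_closed[OF q3(1) q(1)] rel[OF q3(1) q(1) refl] q3(2) q(2) by simp_all
    have "q \<circ> q \<circ> q \<circ> q \<circ> q = id" using perm_rels(10) by (simp add: q_def)
    then show ?thesis using rel[OF q4(1) q(1)] q4(2) q(2) Phiid by simp
  qed
  have "Psi S = Sfix"
  proof (rule S_lemma)
    show "Psi S ** P3 = P3 ** P3 ** Psi S" using arg_cong[OF s1, of Psi] by (simp add: Psimul PsiC)
    show "Psi S ** Psi S = mat 1" using arg_cong[OF s2, of Psi] by (simp add: Psimul Psi1)
    show "(Psi S ** D1) ** (Psi S ** D1) ** (Psi S ** D1) = mat 1"
      using arg_cong[OF s3, of Psi] by (simp add: Psimul Psi1 PsiA1)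
    show "(Psi S ** D2) ** (Psi S ** D2) ** (Psi S ** D2) ** (Psi S ** D2) ** (Psi S ** D2) = mat 1"
      using arg_cong[OF s4, of Psi] by (simp add: Psimul Psi1 PsiA2)
  qed
  then have PsiS: "Psi (Phi ps) = Phi0 ps" by (simp add: S_def Phi0_perms)
  define Zm where "Zm = f (id, 1)"
  have Zcomm: "Zm ** Phi x = Phi x ** Zm" if "x \<in> carrier (alt_group 5)" for x
  proof -
    have "Zm ** Phi x = f ((id, 1) \<otimes>\<^bsub>A5xC2\<^esub> (x, 0))" using fmul[OF Z5c A5c[OF that]] by (simp add: Zm_def Phi_def)
    also have "(id, 1) \<otimes>\<^bsub>A5xC2\<^esub> (x, 0) = (x, 0) \<otimes>\<^bsub>A5xC2\<^esub> (id, 1)" by (simp add: A5C2_mult)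
    also have "f \<dots> = Phi x ** Zm" using fmul[OF A5c[OF that] Z5c] by (simp add: Zm_def Phi_def)
    finally show ?thesis .
  qed
  have Zsq: "Zm ** Zm = mat 1"
  proof -
    have "Zm ** Zm = f ((id, 1) \<otimes>\<^bsub>A5xC2\<^esub> (id, 1))" using fmul[OF Z5c Z5c] by (simp add: Zm_def)
    also have "(id, 1) \<otimes>\<^bsub>A5xC2\<^esub> (id, 1) = ((id, 0) :: (nat \<Rightarrow> nat) \<times> int)" by (simp add: A5C2_mult)
    finally show ?thesis using fone by simp
  qed
  have Zne: "Zm \<noteq> mat 1"
  proof
    assume "Zm = mat 1"
    then have "f (id, 1) = f (id, 0)" using fone by (simp add: Zm_def)
    then have "(id, 1) = ((id, 0) :: (nat \<Rightarrow> nat) \<times> int)"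
      by (rule inj_onD[OF finj _ Z5c A5c[OF A5_id]])
    then show False by simp
  qed
  have "Psi Zm = M3 4 0 0 0 4 0 0 0 4"
  proof (rule Z_lemma)
    show "Psi Zm ** Psi Zm = mat 1" using arg_cong[OF Zsq, of Psi] by (simp add: Psimul Psi1)
    show "Psi Zm \<noteq> mat 1"
    proof
      assume pz: "Psi Zm = mat 1"
      have e: "g ** Psi Zm ** g' = (g ** g') ** Zm ** (g ** g')" by (simp add: Psi_def matrix_mul_assoc)
      have "g ** Psi Zm ** g' = Zm" using e by (simp add: gg)
      then show False using pz Zne gg by simp
    qed
    show "Psi Zm ** D1 = D1 ** Psi Zm"
      using arg_cong[OF Zcomm[OF mem(1)], of Psi] by (simp add: Psimul PsiA1[unfolded A1_def])
    show "Psi Zm ** D2 = D2 ** Psi Zm"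
      using arg_cong[OF Zcomm[OF mem(2)], of Psi] by (simp add: Psimul PsiA2[unfolded A2_def])
    show "Psi Zm ** P3 = P3 ** Psi Zm"
      using arg_cong[OF Zcomm[OF mem(3)], of Psi] by (simp add: Psimul PsiC[unfolded C_def])
  qed
  then have PsiZ: "Psi Zm = mat 4" by (simp add: M3_mat4)
  define T where "T = {x \<in> carrier (alt_group 5). Psi (Phi x) = Phi0 x}"
  interpret G: group "alt_group 5" by (rule alt_group_is_group)
  have Phi0mul: "Phi0 (x \<circ> y) = Phi0 x ** Phi0 y" if "x \<in> carrier (alt_group 5)" "y \<in> carrier (alt_group 5)" for x y
    using Phi0_hom[OF A5_perm[OF that(1)] A5_perm[OF that(2)]] .
  have Tsub: "subgroup T (alt_group 5)"
  proof (rule G.subgroupI)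
    show "T \<subseteq> carrier (alt_group 5)" by (auto simp: T_def)
    show "T \<noteq> {}" using A5_id Phiid Psi1 Phi0_id by (auto simp: T_def)
    show "a \<otimes>\<^bsub>alt_group 5\<^esub> b \<in> T" if "a \<in> T" "b \<in> T" for a b
      using that A5_closed Phimul Phi0mul by (auto simp: T_def alt_group_mult Psimul)
    show "inv\<^bsub>alt_group 5\<^esub> a \<in> T" if "a \<in> T" for a
    proof -
      have a: "a \<in> carrier (alt_group 5)" "Psi (Phi a) = Phi0 a" using that by (auto simp: T_def)
      define b where "b = inv\<^bsub>alt_group 5\<^esub> a"
      have b: "b \<in> carrier (alt_group 5)" using G.inv_closed[OF a(1)] by (simp add: b_def)
      have ab: "a \<circ> b = id" "b \<circ> a = id"
        using G.r_inv[OF a(1)] G.l_inv[OF a(1)] by (simp_all add: b_def alt_group_mult alt_group_one)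
      have p01: "Phi0 a ** Phi0 b = mat 1" using Phi0mul[OF a(1) b] ab(1) Phi0_id by simp
      have "Psi (Phi b) = Psi (Phi b) ** (Phi0 a ** Phi0 b)" by (simp add: p01)
      also have "\<dots> = (Psi (Phi b) ** Psi (Phi a)) ** Phi0 b" by (simp add: a(2) matrix_mul_assoc)
      also have "Psi (Phi b) ** Psi (Phi a) = mat 1"
        using Phimul[OF b a(1)] ab(2) Phiid Psi1 by (simp add: Psimul[symmetric])
      finally have "Psi (Phi b) = Phi0 b" by simp
      then show ?thesis using b by (simp add: T_def b_def)
    qed
  qed
  have "pa1 \<in> T" "pa2 \<in> T" "pc \<in> T" "ps \<in> T"
    using mem PsiA1 PsiA2 PsiC PsiS Phi0_perms by (auto simp: T_def A1_def A2_def C_def)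
  then have Tall: "T = carrier (alt_group 5)" using A5_gen[OF Tsub] by blast
  have agree: "Psi (f z) = phi0 z" if "z \<in> carrier A5xC2" for z
  proof -
    obtain x k where z: "z = (x, k)" by (cases z) auto
    have x: "x \<in> carrier (alt_group 5)" "k = 0 \<or> k = 1" using that by (auto simp: z A5C2_carrier)
    have xT: "Psi (Phi x) = Phi0 x" using x(1) Tall by (auto simp: T_def)
    show ?thesis
    proof (cases "k = 0")
      case True then show ?thesis using xT by (simp add: z phi0_def Phi_def)
    next
      case False
      then have k: "k = 1" using x(2) by simp
      have "(x, 1) = (x, 0) \<otimes>\<^bsub>A5xC2\<^esub> (id, 1)" by (simp add: A5C2_mult)
      then have "f z = Phi x ** Zm" using fmul[OF A5c[OF x(1)] Z5c] by (simp add: z k Phi_def Zm_def)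
      then have "Psi (f z) = Phi0 x ** mat 4" by (simp add: Psimul xT PsiZ)
      then show ?thesis by (simp add: z k phi0_def mat_comm)
    qed
  qed
  have fz: "f z = g ** phi0 z ** g'" if "z \<in> carrier A5xC2" for z
  proof -
    have "g ** Psi (f z) ** g' = (g ** g') ** f z ** (g ** g')" by (simp add: Psi_def matrix_mul_assoc)
    then show ?thesis using agree[OF that] by (simp add: gg)
  qed
  have ginv: "inv\<^bsub>GL3F5\<^esub> g = g'" by (rule GL_inv[OF gg])
  have gc: "g \<in> carrier GL3F5" using gg by (auto simp: GL_carrier invertible_def)
  have "H = f ` carrier A5xC2" using bij by (simp add: bij_betw_def)
  also have "\<dots> = (\<lambda>h. g ** h ** g') ` H0" unfolding H0_def image_image using fz by (auto intro: image_cong)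
  also have "\<dots> = conj_subset GL3F5 g H0" by (simp add: conj_subset_def ginv)
  finally show ?thesis using gc by blast
qed

theorem lemma3p17:
  shows "\<exists>H0. subgroup H0 GL3F5 \<and> GL3F5\<lparr>carrier := H0\<rparr> \<cong> A5xC2 \<and>
           (\<forall>H. subgroup H GL3F5 \<and> GL3F5\<lparr>carrier := H\<rparr> \<cong> A5xC2 \<longrightarrow>
                (\<exists>g \<in> carrier GL3F5. H = conj_subset GL3F5 g H0))"
  using H0_subgroup H0_iso uniq by blast

end
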